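(* Let $f\in\mathcal{R}$ with $f(z)=z+\sum_{n=2}^\infty a_nz^n$ and local inverse $f^{-1}(w)=w+\sum_{n\ge2}A_nw^n$, so $A_2=-a_2$, $A_3=-a_3+2a_2^2$. Then \[ -\frac{1}{\sqrt3}\le|A_3|-|A_2|\le\frac23, \] and both inequalities are sharp.
   Context: $\mathbb{D}$ is the open unit disk; $\mathcal{A}$ is the class of holomorphic $f$ on $\mathbb{D}$ with $f(0)=0$, $f'(0)=1$; $\mathcal{R}=\{f\in\mathcal{A}:\operatorname{Re} f'(z)>0\ \forall z\in\mathbb{D}\}$. *)

theory Defs
  imports "HOL-Analysis.Analysis"
begin

definition classR :: "(complex \<Rightarrow> complex) \<Rightarrow> bool" where
  "classR f \<longleftrightarrow> f holomorphic_on ball 0 1 \<and> f 0 = 0 \<and> deriv f 0 = 1 \<and>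
     (\<forall>z\<in>ball 0 1. Re (deriv f z) > 0)"

definition taylor_coeff :: "(complex \<Rightarrow> complex) \<Rightarrow> nat \<Rightarrow> complex" where
  "taylor_coeff f n = (deriv ^^ n) f 0 / of_nat (fact n)"

text \<open>Coefficients A_2, A_3 of the local inverse, as given in the statement.\<close>
definition invA2 :: "(complex \<Rightarrow> complex) \<Rightarrow> complex" where
  "invA2 f = - taylor_coeff f 2"

definition invA3 :: "(complex \<Rightarrow> complex) \<Rightarrow> complex" where
  "invA3 f = - taylor_coeff f 3 + 2 * (taylor_coeff f 2)^2"

end

theory Submission
  imports Defs "HOL-Complex_Analysis.Complex_Analysis"
begin




lemma fps_exp_unique:
  fixes f g :: "complex \<Rightarrow> complex"
  assumes "f has_fps_expansion F" "g has_fps_expansion G"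
    and "eventually (\<lambda>z. f z = g z) (nhds 0)"
  shows "F = G"
proof -
  have "g has_fps_expansion F" using has_fps_expansion_cong[OF assms(3) refl] assms(1) by simp
  then show ?thesis using assms(2)
    by (intro fps_ext) (simp add: fps_nth_fps_expansion)
qed

lemma ev_ball: "eventually (\<lambda>z. z \<in> ball (0::complex) 1) (nhds 0)"
  by (intro eventually_nhds_in_open) auto

lemma moeb_lt:
  fixes a w :: complex
  assumes "norm a < 1" "norm w < 1"
  shows "norm (w - a) < norm (1 - cnj a * w)"
proof -
  have "complex_of_real ((norm (1 - cnj a * w))^2 - (norm (w - a))^2)
      = complex_of_real ((1 - (norm a)^2) * (1 - (norm w)^2))"
    by (simp only: of_real_diff of_real_mult complex_norm_square of_real_1) (simp add: algebra_simps)
  then have e: "(norm (1 - cnj a * w))^2 - (norm (w - a))^2 = (1 - (norm a)^2) * (1 - (norm w)^2)"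
    using of_real_eq_iff by blast
  have "(norm a)^2 < 1" "(norm w)^2 < 1" using assms by (simp_all add: power_less_one_iff abs_square_less_1)
  then have "(norm (w - a))^2 < (norm (1 - cnj a * w))^2" using e
    by (smt (verit) mult_pos_pos)
  then show ?thesis by (simp add: power2_less_imp_less)
qed


lemma schwarz_pick0:
  assumes hol: "g holomorphic_on ball 0 1" and lt: "\<And>z. norm z < 1 \<Longrightarrow> norm (g z) < 1"
  shows "norm (deriv g 0) \<le> 1 - (norm (g 0))^2"
proof -
  define a where "a = g 0"
  have a1: "norm a < 1" using lt[of 0] by (simp add: a_def)
  have den: "1 - cnj a * g z \<noteq> 0" if "norm z < 1" for z
  proof
    assume "1 - cnj a * g z = 0"
    then have "norm (cnj a * g z) = 1" by (metis eq_iff_diff_eq_0 norm_one)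
    moreover have "norm (cnj a * g z) < 1"
      using a1 lt[OF that] by (simp add: norm_mult) (smt (verit) mult_left_le_one_le norm_ge_zero)
    ultimately show False by simp
  qed
  define h where "h z = (g z - a) / (1 - cnj a * g z)" for z
  have holh: "h holomorphic_on ball 0 1"
    unfolding h_def using den hol by (auto intro!: holomorphic_intros)
  have h0: "h 0 = 0" by (simp add: h_def a_def)
  have hlt: "norm (h z) < 1" if "norm z < 1" for z
    using moeb_lt[OF a1 lt[OF that]] den[OF that]
    by (simp add: h_def norm_divide divide_less_eq_1)
  have "norm (deriv h 0) \<le> 1"
    by (rule Schwarz_Lemma(2)[OF holh h0 hlt, of 0]) auto
  have dg: "(g has_field_derivative deriv g 0) (at 0)"
    using hol by (intro holomorphic_derivI[of g "ball 0 1"]) auto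
  have a2: "1 - cnj a * a \<noteq> 0" using den[of 0] by (simp add: a_def)
  have "(h has_field_derivative deriv g 0 / (1 - cnj a * a)) (at 0)"
  proof -
    have "((\<lambda>z. (g z - a) / (1 - cnj a * g z)) has_field_derivative
       ((deriv g 0) * (1 - cnj a * g 0) - (g 0 - a) * (- (cnj a * deriv g 0))) / (1 - cnj a * g 0)^2) (at 0)"
      using a2 by (auto intro!: derivative_eq_intros dg simp: a_def power2_eq_square)
    moreover have "((deriv g 0) * (1 - cnj a * g 0) - (g 0 - a) * (- (cnj a * deriv g 0))) / (1 - cnj a * g 0)^2
       = deriv g 0 / (1 - cnj a * a)"
      using a2 by (simp add: a_def power2_eq_square)
    ultimately show ?thesis by (simp add: h_def[abs_def])
  qed
  then have "deriv h 0 = deriv g 0 / (1 - cnj a * a)" by (rule DERIV_imp_deriv)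
  have "cnj a * a = complex_of_real ((norm a)^2)" by (simp add: complex_norm_square mult.commute del: of_real_power)
  then have c: "1 - cnj a * a = complex_of_real (1 - (norm a)^2)" by simp
  have pos: "0 < 1 - (norm a)^2" using a1 by (simp add: abs_square_less_1)
  have "norm (deriv h 0) = norm (deriv g 0) / norm (complex_of_real (1 - (norm a)^2))"
    unfolding \<open>deriv h 0 = _\<close> c by (simp only: norm_divide)
  also have "norm (complex_of_real (1 - (norm a)^2)) = 1 - (norm a)^2"
    using pos by (simp only: norm_of_real)
  finally have "norm (deriv h 0) = norm (deriv g 0) / (1 - (norm a)^2)" .
  with \<open>norm (deriv h 0) \<le> 1\<close> pos show ?thesis
    by (simp add: a_def divide_le_eq)
qed


lemma omega_bound:
  assumes hol: "w holomorphic_on ball 0 1" and w0: "w 0 = 0"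
    and lt: "\<And>z. norm z < 1 \<Longrightarrow> norm (w z) < 1"
  shows "norm (fps_nth (fps_expansion w 0) 2) \<le> 1 - (norm (fps_nth (fps_expansion w 0) 1))^2"
proof -
  define W where "W = fps_expansion w 0"
  have hW: "w has_fps_expansion W" unfolding W_def using hol by (intro has_fps_expansion_fps_expansion) auto
  have S1: "norm (w \<xi>) \<le> norm \<xi>" if "norm \<xi> < 1" for \<xi>
    by (rule Schwarz_Lemma(1)[OF hol w0 lt that]) 
  have S2: "norm (deriv w 0) \<le> 1" by (rule Schwarz_Lemma(2)[OF hol w0 lt, of 0]) auto
  have S3: "((\<exists>z. norm z < 1 \<and> z \<noteq> 0 \<and> norm(w z) = norm z) \<or> norm(deriv w 0) = 1)
           \<Longrightarrow> \<exists>\<alpha>. (\<forall>z. norm z < 1 \<longrightarrow> w z = \<alpha> * z) \<and> norm \<alpha> = 1"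
    by (rule Schwarz_Lemma(3)[OF hol w0 lt, of 0]) auto
  show ?thesis
  proof (cases "\<exists>\<alpha>. (\<forall>z. norm z < 1 \<longrightarrow> w z = \<alpha> * z) \<and> norm \<alpha> = 1")
    case True
    then obtain \<alpha> where al: "\<forall>z. norm z < 1 \<longrightarrow> w z = \<alpha> * z" "norm \<alpha> = 1" by blast
    have "(\<lambda>z. \<alpha> * z) has_fps_expansion fps_const \<alpha> * fps_X"
      by (intro fps_expansion_intros)
    moreover have "eventually (\<lambda>z. w z = \<alpha> * z) (nhds 0)"
      using ev_ball by eventually_elim (use al in auto)
    ultimately have "W = fps_const \<alpha> * fps_X" using hW fps_exp_unique by blast
    then show ?thesis using al by (simp add: W_def[symmetric])
  next
    case False
    then have nr: "\<not> (\<exists>z. norm z < 1 \<and> z \<noteq> 0 \<and> norm (w z) = norm z)" "norm (deriv w 0) \<noteq> 1"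
      using S3 by blast+
    obtain g where holg: "g holomorphic_on ball 0 1" and wg: "\<And>z. norm z < 1 \<Longrightarrow> w z = z * g z"
      and dg: "deriv w 0 = g 0"
      using Schwarz3[OF hol w0] by blast
    have glt: "norm (g z) < 1" if z: "norm z < 1" for z
    proof (cases "z = 0")
      case True
      then show ?thesis using S2 nr(2) dg by auto
    next
      case False
      have "norm (w z) \<le> norm z" "norm (w z) \<noteq> norm z" using S1[OF z] nr(1) z False by auto
      then have "norm z * norm (g z) < norm z * 1" using wg[OF z] by (simp add: norm_mult)
      then show ?thesis using False by (simp add: mult_less_cancel_left)
    qed
    define G where "G = fps_expansion g 0"
    have hG: "g has_fps_expansion G" unfolding G_def using holg by (intro has_fps_expansion_fps_expansion) auto
    have "(\<lambda>z. z * g z) has_fps_expansion fps_X * G"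
      by (intro fps_expansion_intros hG)
    moreover have "eventually (\<lambda>z. w z = z * g z) (nhds 0)"
      using ev_ball by eventually_elim (use wg in auto)
    ultimately have WG: "W = fps_X * G" using hW fps_exp_unique by blast
    have "W $ 1 = g 0" "W $ 2 = deriv g 0"
      unfolding WG using fps_nth_fps_expansion[OF hG, of 0] fps_nth_fps_expansion[OF hG, of 1] by auto
    then show ?thesis using schwarz_pick0[OF holg glt] by (simp add: W_def)
  qed
qed


lemma classR_coeffs:
  assumes "classR f"
  defines "w \<equiv> (\<lambda>z. (deriv f z - 1) / (deriv f z + 1))"
  shows "taylor_coeff f 2 = fps_nth (fps_expansion w 0) 1"
    and "taylor_coeff f 3 = (2 * fps_nth (fps_expansion w 0) 2 + 2 * (fps_nth (fps_expansion w 0) 1)^2) / 3"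
    and "w holomorphic_on ball 0 1" "w 0 = 0" "\<And>z. norm z < 1 \<Longrightarrow> norm (w z) < 1"
proof -
  have holf: "f holomorphic_on ball 0 1" and f0: "f 0 = 0" and d1: "deriv f 0 = 1"
    and re: "\<And>z. z \<in> ball 0 1 \<Longrightarrow> Re (deriv f z) > 0"
    using assms(1) by (auto simp: classR_def)
  have holp: "deriv f holomorphic_on ball 0 1" by (rule holomorphic_deriv[OF holf]) auto
  have nz: "deriv f z + 1 \<noteq> 0" if "z \<in> ball 0 1" for z
    using re[OF that] by (metis add_pos_pos one_complex.sel plus_complex.sel(1) zero_complex.sel(1) less_irrefl zero_less_one)
  show holw: "w holomorphic_on ball 0 1" unfolding w_def using holp nz by (auto intro!: holomorphic_intros)
  show "w 0 = 0" by (simp add: w_def d1)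
  show "norm (w z) < 1" if "norm z < 1" for z
  proof -
    have z: "z \<in> ball 0 1" using that by simp
    let ?p = "deriv f z"
    have "(norm (?p - 1))^2 < (norm (?p + 1))^2"
      using re[OF z] unfolding cmod_power2 by (simp add: power2_eq_square algebra_simps)
    then have "norm (?p - 1) < norm (?p + 1)" by (simp add: power2_less_imp_less)
    then show ?thesis using nz[OF z] by (simp add: w_def norm_divide divide_less_eq_1)
  qed
  define F where "F = fps_expansion f 0"
  have hF: "f has_fps_expansion F" unfolding F_def using holf by (intro has_fps_expansion_fps_expansion) auto
  define P where "P = fps_deriv F"
  have hP: "deriv f has_fps_expansion P" unfolding P_def by (rule has_fps_expansion_deriv[OF hF])
  define W where "W = fps_expansion w 0"
  have hW: "w has_fps_expansion W" unfolding W_def using holw by (intro has_fps_expansion_fps_expansion) auto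
  have "(\<lambda>z. w z * (deriv f z + 1)) has_fps_expansion W * (P + 1)"
    by (intro fps_expansion_intros hW hP)
  moreover have "(\<lambda>z. deriv f z - 1) has_fps_expansion P - 1"
    by (intro fps_expansion_intros hP)
  moreover have "eventually (\<lambda>z. w z * (deriv f z + 1) = deriv f z - 1) (nhds 0)"
    using ev_ball by eventually_elim (use nz in \<open>auto simp: w_def\<close>)
  ultimately have E: "W * (P + 1) = P - 1" using fps_exp_unique by blast
  have tc: "taylor_coeff f n = F $ n" for n
    unfolding taylor_coeff_def fps_nth_fps_expansion[OF hF] by simp
  have Pn: "P $ n = of_nat (n + 1) * F $ (n + 1)" for n by (simp add: P_def)
  have P0: "P $ 0 = 1" using Pn[of 0] fps_nth_fps_expansion[OF hF, of 1] d1 by simp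
  have e0: "(W * (P + 1)) $ 0 = (P - 1) $ 0" using E by simp
  have e1: "(W * (P + 1)) $ 1 = (P - 1) $ 1" using E by simp
  have e2: "(W * (P + 1)) $ 2 = (P - 1) $ 2" using E by simp
  have W0: "W $ 0 = 0" using e0 P0 by simp
  have W1: "2 * W $ 1 = P $ 1" using e1 P0 W0 by (simp add: fps_mult_nth_1 mult.commute)
  have W2: "W $ 1 * P $ 1 + 2 * W $ 2 = P $ 2" using e2 P0 W0
    by (simp add: fps_mult_nth numeral_2_eq_2 mult.commute)
  show "taylor_coeff f 2 = fps_nth (fps_expansion w 0) 1"
    using W1 Pn[of 1] by (simp add: tc W_def[symmetric] numeral_2_eq_2)
  show "taylor_coeff f 3 = (2 * fps_nth (fps_expansion w 0) 2 + 2 * (fps_nth (fps_expansion w 0) 1)^2) / 3"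
    using W1 W2 Pn[of 1] Pn[of 2] unfolding tc W_def[symmetric]
    by (simp add: power2_eq_square field_simps numeral_2_eq_2 numeral_3_eq_3)
qed


lemma coeff_ineq:
  fixes u v :: complex
  assumes hv: "norm v \<le> 1 - (norm u)^2"
  shows "- 1 / sqrt 3 \<le> norm (- ((2 * v + 2 * u^2) / 3) + 2 * u^2) - norm (- u)"
    and "norm (- ((2 * v + 2 * u^2) / 3) + 2 * u^2) - norm (- u) \<le> 2 / 3"
proof -
  define t where "t = norm u"
  have eq: "- ((2 * v + 2 * u^2) / 3) + 2 * u^2 = (4 * u^2 - 2 * v) / 3" by (simp add: field_simps)
  define A where "A = norm ((4 * u^2 - 2 * v) / 3)"
  have nu2: "norm (4 * u^2) = 4 * t^2" by (simp add: t_def norm_mult norm_power)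
  have nv2: "norm (2 * v) = 2 * norm v" by (simp add: norm_mult)
  have Aup: "A \<le> (4 * t^2 + 2 * norm v) / 3"
    unfolding A_def norm_divide using norm_triangle_ineq4[of "4 * u^2" "2 * v"] nu2 nv2 by simp
  have Alo: "A \<ge> (4 * t^2 - 2 * norm v) / 3"
    unfolding A_def norm_divide using norm_triangle_ineq2[of "4 * u^2" "2 * v"] nu2 nv2 by simp
  have A0: "A \<ge> 0" by (simp add: A_def)
  have t0: "t \<ge> 0" by (simp add: t_def)
  have t1: "t^2 \<le> 1" using hv norm_ge_zero[of v] unfolding t_def by linarith
  then have t1': "t \<le> 1" using t0 by (simp add: power_le_one_iff)
  have hv': "norm v \<le> 1 - t^2" using hv by (simp add: t_def)
  have "A - t \<le> 2/3"
  proof -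
    have "A \<le> (2 + 2 * t^2) / 3" using Aup hv' by simp
    moreover have "2 * t^2 \<le> 3 * t" using mult_right_mono[OF t1' t0] t0 unfolding power2_eq_square by linarith
    ultimately show ?thesis by simp
  qed
  then show "norm (- ((2 * v + 2 * u^2) / 3) + 2 * u^2) - norm (- u) \<le> 2 / 3"
    by (simp only: eq A_def[symmetric] norm_minus_cancel t_def[symmetric])
  define s where "s = 1 / sqrt 3"
  have s2: "s * s = 1/3" by (simp add: s_def)
  have s0: "s > 0" by (simp add: s_def)
  have s4: "s > 1/4"
  proof -
    have "sqrt 3 < 4" by (rule real_less_lsqrt) auto
    then show ?thesis by (simp add: s_def divide_simps)
  qed
  have "A - t \<ge> - s"
  proof (cases "t \<le> s")
    case True
    then show ?thesis using A0 by simp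
  next
    case False
    have "A \<ge> 2 * t^2 - 2/3" using Alo hv' by simp
    moreover have "(t - s) * (2 * t + 2 * s - 1) \<ge> 0" using False s4 t0 by (intro mult_nonneg_nonneg) auto
    ultimately show ?thesis using s2 by (simp add: algebra_simps power2_eq_square)
  qed
  then show "- 1 / sqrt 3 \<le> norm (- ((2 * v + 2 * u^2) / 3) + 2 * u^2) - norm (- u)"
    by (simp only: eq A_def[symmetric] norm_minus_cancel t_def[symmetric]) (simp add: s_def)
qed



lemma Re_cayley_pos:
  fixes w :: complex assumes "norm w < 1"
  shows "Re ((1 + w) / (1 - w)) > 0"
proof -
  have w1: "w \<noteq> 1" using assms by auto
  have "(cmod w)^2 < 1" using assms by (simp add: abs_square_less_1)
  then have "(Re w)^2 + (Im w)^2 < 1" unfolding cmod_power2 .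
  then have num: "(1 + Re w) * (1 - Re w) + Im w * (- Im w) > 0" by (simp add: power2_eq_square algebra_simps)
  have "cmod (1 - w) \<noteq> 0" using w1 by simp
  then have "(cmod (1 - w))^2 > 0" by simp
  then have d: "(Re (1-w))^2 + (Im (1-w))^2 > 0" unfolding cmod_power2 .
  show ?thesis unfolding Re_divide cmod_power2 using num d by (intro divide_pos_pos) simp_all
qed

lemma construct:
  assumes hol: "w holomorphic_on ball 0 1" and w0: "w 0 = 0"
    and lt: "\<And>z. norm z < 1 \<Longrightarrow> norm (w z) < 1"
  obtains f where "classR f" "\<And>z. z \<in> ball 0 1 \<Longrightarrow> (deriv f z - 1) / (deriv f z + 1) = w z"
proof -
  have nz: "1 - w z \<noteq> 0" if "z \<in> ball 0 1" for z
    using lt[of z] that by auto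
  define p where "p z = (1 + w z) / (1 - w z)" for z
  have holp: "p holomorphic_on ball 0 1" unfolding p_def using hol nz by (auto intro!: holomorphic_intros)
  obtain g where g: "\<And>x. x \<in> ball 0 1 \<Longrightarrow> (g has_field_derivative p x) (at x within ball 0 1)"
    using holomorphic_convex_primitive'[OF convex_ball open_ball holp] by blast
  define f where "f z = g z - g 0" for z
  have df: "(f has_field_derivative p x) (at x)" if "x \<in> ball 0 1" for x
  proof -
    have "(g has_field_derivative p x) (at x)" using g[OF that] at_within_open[OF that open_ball] by simp
    then show ?thesis unfolding f_def[abs_def] by (auto intro!: derivative_eq_intros)
  qed
  have deq: "deriv f x = p x" if "x \<in> ball 0 1" for x using df[OF that] by (rule DERIV_imp_deriv)
  have "classR f"
    unfolding classR_def
  proof (intro conjI ballI)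
    show "f holomorphic_on ball 0 1" unfolding holomorphic_on_open[OF open_ball] using df by blast
    show "f 0 = 0" by (simp add: f_def)
    show "deriv f 0 = 1" using deq[of 0] by (simp add: p_def w0)
    fix z :: complex assume z: "z \<in> ball 0 1"
    show "Re (deriv f z) > 0" using deq[OF z] Re_cayley_pos[OF lt[of z]] z by (simp add: p_def)
  qed
  moreover have "(deriv f z - 1) / (deriv f z + 1) = w z" if z: "z \<in> ball 0 1" for z
  proof -
    have n1: "1 - w z \<noteq> 0" using nz[OF z] .
    have e1: "deriv f z - 1 = 2 * w z / (1 - w z)" using deq[OF z] n1 by (simp add: p_def field_simps)
    have e2: "deriv f z + 1 = 2 / (1 - w z)" using deq[OF z] n1 by (simp add: p_def field_simps)
    show ?thesis unfolding e1 e2 using n1 by (simp add: field_simps)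
  qed
  ultimately show ?thesis using that by blast
qed

definition val :: "(complex \<Rightarrow> complex) \<Rightarrow> real" where
  "val f = cmod (invA3 f) - cmod (invA2 f)"

lemma val_formula:
  assumes "classR f"
  defines "W \<equiv> fps_expansion (\<lambda>z. (deriv f z - 1) / (deriv f z + 1)) 0"
  shows "val f = norm (- ((2 * fps_nth W 2 + 2 * (fps_nth W 1)^2) / 3) + 2 * (fps_nth W 1)^2) - norm (- (fps_nth W 1))"
  unfolding val_def invA2_def invA3_def classR_coeffs(1,2)[OF assms(1)] W_def ..

lemma val_bounds:
  assumes "classR f"
  shows "- 1 / sqrt 3 \<le> val f" "val f \<le> 2 / 3"
proof -
  note C = classR_coeffs[OF assms]
  have "norm (fps_nth (fps_expansion (\<lambda>z. (deriv f z - 1) / (deriv f z + 1)) 0) 2)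
     \<le> 1 - (norm (fps_nth (fps_expansion (\<lambda>z. (deriv f z - 1) / (deriv f z + 1)) 0) 1))^2"
    by (rule omega_bound[OF C(3,4,5)])
  from coeff_ineq[OF this] show "- 1 / sqrt 3 \<le> val f" "val f \<le> 2 / 3"
    unfolding val_formula[OF assms] by auto
qed

lemma val_construct:
  assumes hol: "w holomorphic_on ball 0 1" and w0: "w 0 = 0"
    and lt: "\<And>z. norm z < 1 \<Longrightarrow> norm (w z) < 1"
  obtains f where "classR f"
    "val f = norm (- ((2 * fps_nth (fps_expansion w 0) 2 + 2 * (fps_nth (fps_expansion w 0) 1)^2) / 3)
                 + 2 * (fps_nth (fps_expansion w 0) 1)^2) - norm (- (fps_nth (fps_expansion w 0) 1))"
proof -
  obtain f where f: "classR f" "\<And>z. z \<in> ball 0 1 \<Longrightarrow> (deriv f z - 1) / (deriv f z + 1) = w z"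
    using construct[OF assms] by blast
  have eqW: "fps_expansion (\<lambda>z. (deriv f z - 1) / (deriv f z + 1)) 0 = fps_expansion w 0"
    unfolding fps_expansion_def
    by (intro arg_cong[where f=Abs_fps] ext arg_cong[where f="\<lambda>x. x / _"] higher_deriv_cong_ev refl)
       (use ev_ball in \<open>eventually_elim, use f(2) in auto\<close>)
  show ?thesis by (rule that[OF f(1)]) (unfold val_formula[OF f(1)] eqW, rule refl)
qed


lemma ex_upper: "\<exists>f. classR f \<and> val f = 2 / 3"
proof -
  define w :: "complex \<Rightarrow> complex" where "w z = z ^ 2" for z
  have hol: "w holomorphic_on ball 0 1" unfolding w_def by (intro holomorphic_intros)
  have w0: "w 0 = 0" by (simp add: w_def)
  have lt: "norm (w z) < 1" if "norm z < 1" for z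
    using that by (simp add: w_def norm_power abs_square_less_1)
  have "fps_expansion w 0 = fps_X ^ 2"
  proof (rule fps_exp_unique)
    show "w has_fps_expansion fps_expansion w 0" using hol by (intro has_fps_expansion_fps_expansion) auto
    show "w has_fps_expansion fps_X ^ 2" unfolding w_def[abs_def] by (rule has_fps_expansion_fps_X_power)
  qed simp
  then have W: "fps_nth (fps_expansion w 0) 1 = 0" "fps_nth (fps_expansion w 0) 2 = 1"
    by (simp_all add: power2_eq_square numeral_2_eq_2)
  obtain f where "classR f" "val f = norm (- ((2 * fps_nth (fps_expansion w 0) 2 + 2 * (fps_nth (fps_expansion w 0) 1)^2) / 3)
                 + 2 * (fps_nth (fps_expansion w 0) 1)^2) - norm (- (fps_nth (fps_expansion w 0) 1))"
    using val_construct[OF hol w0 lt] by blast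
  then show ?thesis unfolding W by auto
qed

lemma ex_lower: "\<exists>f. classR f \<and> val f = - 1 / sqrt 3"
proof -
  define s :: real where "s = 1 / sqrt 3"
  define c :: complex where "c = of_real s"
  have s2: "s^2 = 1/3" by (simp add: s_def power_divide)
  have c2: "c^2 = 1/3" unfolding c_def using s2 by (metis of_real_power of_real_divide of_real_1 of_real_numeral)
  have s0: "0 < s" "s < 1" by (simp_all add: s_def)
  have nc: "norm c < 1" using s0 by (simp add: c_def)
  have cc: "cnj c = c" by (simp add: c_def)
  define w :: "complex \<Rightarrow> complex" where "w z = z * (z + c) / (1 + c * z)" for z
  have den: "1 + c * z \<noteq> 0" if "norm z < 1" for z
  proof
    assume "1 + c * z = 0"
    then have "norm (c * z) = 1" by (metis add_eq_0_iff norm_minus_cancel norm_one)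
    moreover have "norm (c * z) < 1" using nc that
      by (simp add: norm_mult) (smt (verit) mult_left_le_one_le norm_ge_zero)
    ultimately show False by simp
  qed
  have hol: "w holomorphic_on ball 0 1" unfolding w_def using den by (auto intro!: holomorphic_intros)
  have w0: "w 0 = 0" by (simp add: w_def)
  have lt: "norm (w z) < 1" if z: "norm z < 1" for z
  proof -
    have "norm (z - (- c)) < norm (1 - cnj (- c) * z)" using moeb_lt[of "- c" z] nc z by simp
    then have "norm (z + c) < norm (1 + c * z)" using cc by simp
    then have "norm ((z + c) / (1 + c * z)) < 1" using den[OF z] by (simp add: norm_divide divide_less_eq_1)
    then have "norm z * norm ((z + c) / (1 + c * z)) < 1 * 1"
      using z by (intro mult_strict_mono') auto
    then show ?thesis by (simp add: w_def norm_mult norm_divide)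
  qed
  define W where "W = fps_expansion w 0"
  have hW: "w has_fps_expansion W" unfolding W_def using hol by (intro has_fps_expansion_fps_expansion) auto
  have "(\<lambda>z. w z * (1 + c * z)) has_fps_expansion W * (1 + fps_const c * fps_X)"
    by (intro fps_expansion_intros hW)
  moreover have "(\<lambda>z. z * (z + c)) has_fps_expansion fps_X * (fps_X + fps_const c)"
    by (intro fps_expansion_intros)
  moreover have "eventually (\<lambda>z. w z * (1 + c * z) = z * (z + c)) (nhds 0)"
    using ev_ball by eventually_elim (use den in \<open>auto simp: w_def\<close>)
  ultimately have E: "W * (1 + fps_const c * fps_X) = fps_X * (fps_X + fps_const c)" using fps_exp_unique by blast
  have e0: "fps_nth (W * (1 + fps_const c * fps_X)) 0 = fps_nth (fps_X * (fps_X + fps_const c)) 0" using E by simp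
  have e1: "fps_nth (W * (1 + fps_const c * fps_X)) 1 = fps_nth (fps_X * (fps_X + fps_const c)) 1" using E by simp
  have e2: "fps_nth (W * (1 + fps_const c * fps_X)) 2 = fps_nth (fps_X * (fps_X + fps_const c)) 2" using E by simp
  have W0: "fps_nth W 0 = 0" using e0 by simp
  have W1: "fps_nth W 1 = c" using e1 W0 by (simp add: fps_mult_nth_1)
  have W2: "fps_nth W 2 = 1 - c^2" using e2 W0 W1 by (simp add: fps_mult_nth numeral_2_eq_2 power2_eq_square algebra_simps)
  obtain f where f: "classR f" "val f = norm (- ((2 * fps_nth (fps_expansion w 0) 2 + 2 * (fps_nth (fps_expansion w 0) 1)^2) / 3)
                 + 2 * (fps_nth (fps_expansion w 0) 1)^2) - norm (- (fps_nth (fps_expansion w 0) 1))"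
    using val_construct[OF hol w0 lt] by blast
  have "- ((2 * fps_nth W 2 + 2 * (fps_nth W 1)^2) / 3) + 2 * (fps_nth W 1)^2 = 0"
    unfolding W1 W2 c2 by simp
  then have "val f = - norm c" using f(2) unfolding W_def[symmetric] W1 by simp
  moreover have "norm c = 1 / sqrt 3" using s0 unfolding c_def norm_of_real by (simp add: s_def)
  ultimately show ?thesis using f(1) by auto
qed

theorem mainTheorem10:
  shows "(\<forall>f. classR f \<longrightarrow>
            - 1 / sqrt 3 \<le> cmod (invA3 f) - cmod (invA2 f) \<and>
            cmod (invA3 f) - cmod (invA2 f) \<le> 2 / 3)
       \<and> (SUP f\<in>{f. classR f}. cmod (invA3 f) - cmod (invA2 f)) = 2 / 3
       \<and> (INF f\<in>{f. classR f}. cmod (invA3 f) - cmod (invA2 f)) = - 1 / sqrt 3"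
proof (intro conjI allI impI)
  fix f assume "classR f"
  then show "- 1 / sqrt 3 \<le> cmod (invA3 f) - cmod (invA2 f)" "cmod (invA3 f) - cmod (invA2 f) \<le> 2 / 3"
    using val_bounds unfolding val_def by auto
next
  obtain f0 where f0: "classR f0" "val f0 = 2 / 3" using ex_upper by blast
  show "(SUP f\<in>{f. classR f}. cmod (invA3 f) - cmod (invA2 f)) = 2 / 3"
  proof (rule cSup_eq_maximum)
    show "2 / 3 \<in> (\<lambda>f. cmod (invA3 f) - cmod (invA2 f)) ` {f. classR f}"
      using f0 unfolding val_def by (auto intro!: image_eqI[of _ _ f0])
  qed (use val_bounds in \<open>auto simp: val_def\<close>)
next
  obtain f0 where f0: "classR f0" "val f0 = - 1 / sqrt 3" using ex_lower by blast
  show "(INF f\<in>{f. classR f}. cmod (invA3 f) - cmod (invA2 f)) = - 1 / sqrt 3"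
  proof (rule cInf_eq_minimum)
    show "- 1 / sqrt 3 \<in> (\<lambda>f. cmod (invA3 f) - cmod (invA2 f)) ` {f. classR f}"
      using f0 unfolding val_def by (auto intro!: image_eqI[of _ _ f0])
  qed (use val_bounds in \<open>auto simp: val_def\<close>)
qed

end
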